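(* Let $\mathcal O_M\subseteq\mathcal O_L$ be a quadratic extension of Dedekind domains with fraction fields $M\subseteq L$, $L/M$ Galois with $\operatorname{Gal}(L/M)=\langle\sigma\rangle\cong{\mathbf Z}/2{\mathbf Z}$. Define $\mathrm{ATr}:\mathcal O_L\to\mathcal O_L$ by $\mathrm{ATr}(x)=x-x^\sigma$ and $\mathscr A=\mathrm{ATr}(\mathcal O_L)$. Then for every nonzero ideal $I\subseteq\mathcal O_M$, \[ \mathcal O_M+I\mathcal O_L=\{x\in\mathcal O_L\mid \mathrm{ATr}(x)\in I\mathscr A\}. \] Moreover $\mathscr A$ is a projective $\mathcal O_M$-module of rank $1$.
   Context: "Quadratic extension of Dedekind domains" means $\mathcal O_L$ is a Dedekind domain containing $\mathcal O_M$, finitely generated as an $\mathcal O_M$-module, with $[L:M]=2$. *)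

theory Defs
  imports "HOL-Computational_Algebra.Polynomial"
begin

text \<open>All rings are subrings of an ambient field 'a (the field L).\<close>

definition subring :: "'a::field set \<Rightarrow> bool" where
  "subring R \<longleftrightarrow> 0 \<in> R \<and> 1 \<in> R \<and>
     (\<forall>x\<in>R. \<forall>y\<in>R. x + y \<in> R \<and> x - y \<in> R \<and> x * y \<in> R)"

definition frac :: "'a::field set \<Rightarrow> 'a set" where
  "frac R = {a / b | a b. a \<in> R \<and> b \<in> R \<and> b \<noteq> 0}"

definition set_mult :: "'a::field set \<Rightarrow> 'a set \<Rightarrow> 'a set" where
  "set_mult X Y = {\<Sum>k<n. x k * y k | (n::nat) x y. \<forall>k<n. x k \<in> X \<and> y k \<in> Y}"

definition ideal_of :: "'a::field set \<Rightarrow> 'a set \<Rightarrow> bool" where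
  "ideal_of R I \<longleftrightarrow> I \<subseteq> R \<and> 0 \<in> I \<and>
     (\<forall>x\<in>I. \<forall>y\<in>I. x + y \<in> I) \<and> (\<forall>r\<in>R. \<forall>x\<in>I. r * x \<in> I)"

definition prime_ideal_of :: "'a::field set \<Rightarrow> 'a set \<Rightarrow> bool" where
  "prime_ideal_of R P \<longleftrightarrow> ideal_of R P \<and> P \<noteq> R \<and>
     (\<forall>a\<in>R. \<forall>b\<in>R. a * b \<in> P \<longrightarrow> a \<in> P \<or> b \<in> P)"

definition maximal_ideal_of :: "'a::field set \<Rightarrow> 'a set \<Rightarrow> bool" where
  "maximal_ideal_of R P \<longleftrightarrow> ideal_of R P \<and> P \<noteq> R \<and>
     (\<forall>J. ideal_of R J \<and> P \<subseteq> J \<longrightarrow> J = P \<or> J = R)"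

definition integral_over :: "'a::field set \<Rightarrow> 'a \<Rightarrow> bool" where
  "integral_over R x \<longleftrightarrow>
     (\<exists>p::'a poly. (\<forall>i. coeff p i \<in> R) \<and> lead_coeff p = 1 \<and> poly p x = 0)"

definition dedekind_domain :: "'a::field set \<Rightarrow> bool" where
  "dedekind_domain R \<longleftrightarrow> subring R \<and>
     (\<forall>I. ideal_of R I \<longrightarrow> (\<exists>F. finite F \<and> F \<subseteq> I \<and> I = set_mult R F)) \<and>
     (\<forall>x\<in>frac R. integral_over R x \<longrightarrow> x \<in> R) \<and>
     (\<forall>P. prime_ideal_of R P \<and> P \<noteq> {0} \<longrightarrow> maximal_ideal_of R P)"

definition fin_gen_module :: "'a::field set \<Rightarrow> 'a set \<Rightarrow> bool" where
  "fin_gen_module R S \<longleftrightarrow> (\<exists>F. finite F \<and> F \<subseteq> S \<and> S = set_mult R F)"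

definition degree_two_over :: "'a::field set \<Rightarrow> bool" where
  "degree_two_over K \<longleftrightarrow> (\<exists>b1 b2. \<forall>x. \<exists>!m. fst m \<in> K \<and> snd m \<in> K \<and>
       x = fst m * b1 + snd m * b2)"

definition field_aut :: "('a::field \<Rightarrow> 'a) \<Rightarrow> bool" where
  "field_aut \<tau> \<longleftrightarrow> bij \<tau> \<and> \<tau> 1 = 1 \<and>
     (\<forall>x y. \<tau> (x + y) = \<tau> x + \<tau> y \<and> \<tau> (x * y) = \<tau> x * \<tau> y)"

definition Gal :: "'a::field set \<Rightarrow> ('a \<Rightarrow> 'a) set" where
  "Gal K = {\<tau>. field_aut \<tau> \<and> (\<forall>k\<in>K. \<tau> k = k)}"

definition galois_over :: "'a::field set \<Rightarrow> bool" where
  "galois_over K \<longleftrightarrow> {x. \<forall>\<tau>\<in>Gal K. \<tau> x = x} = K"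

definition free_mod :: "'a::field set \<Rightarrow> nat \<Rightarrow> (nat \<Rightarrow> 'a) set" where
  "free_mod R n = {v. (\<forall>i. v i \<in> R) \<and> (\<forall>i\<ge>n. v i = 0)}"

text \<open>A (a submodule of the ambient field) is a projective R-module: a direct summand
  of a (finitely generated) free R-module R^n, i.e. there are R-linear
  i : A \<rightarrow> R^n and p : R^n \<rightarrow> A with p \<circ> i = id.\<close>
definition projective_module :: "'a::field set \<Rightarrow> 'a set \<Rightarrow> bool" where
  "projective_module R A \<longleftrightarrow> (\<exists>n::nat. \<exists>\<iota> \<pi>.
     (\<forall>x\<in>A. \<iota> x \<in> free_mod R n) \<and>
     (\<forall>x\<in>A. \<forall>y\<in>A. \<iota> (x + y) = (\<lambda>i. \<iota> x i + \<iota> y i)) \<and>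
     (\<forall>r\<in>R. \<forall>x\<in>A. \<iota> (r * x) = (\<lambda>i. r * \<iota> x i)) \<and>
     (\<forall>v\<in>free_mod R n. \<pi> v \<in> A) \<and>
     (\<forall>v\<in>free_mod R n. \<forall>w\<in>free_mod R n. \<pi> (\<lambda>i. v i + w i) = \<pi> v + \<pi> w) \<and>
     (\<forall>r\<in>R. \<forall>v\<in>free_mod R n. \<pi> (\<lambda>i. r * v i) = r * \<pi> v) \<and>
     (\<forall>x\<in>A. \<pi> (\<iota> x) = x))"

text \<open>Rank of a submodule A of the ambient field over a domain R: the dimension of
  Frac(R) \<otimes> A = Frac(R)\<cdot>A; rank 1 means this span is one-dimensional.\<close>
definition rank_one :: "'a::field set \<Rightarrow> 'a set \<Rightarrow> bool" where
  "rank_one R A \<longleftrightarrow> (\<exists>a\<in>A. a \<noteq> 0 \<and> (\<forall>x\<in>A. \<exists>m\<in>frac R. x = m * a))"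

end

theory Submission
  imports Defs
begin

lemma sum_closed:
  assumes "0 \<in> S" "\<forall>x\<in>S. \<forall>y\<in>S. x + y \<in> S" "\<forall>k<(n::nat). f k \<in> S"
  shows "(\<Sum>k<n. f k) \<in> S"
  using assms(3) by (induction n) (auto simp: assms(1,2))

lemma subring_sum: "subring R \<Longrightarrow> \<forall>k<(n::nat). f k \<in> R \<Longrightarrow> (\<Sum>k<n. f k) \<in> R"
  by (rule sum_closed) (auto simp: subring_def)

lemma set_mult_iff: "z \<in> set_mult X Y \<longleftrightarrow> (\<exists>n x y. z = (\<Sum>k<(n::nat). x k * y k) \<and> (\<forall>k<n. x k \<in> X \<and> y k \<in> Y))"
  unfolding set_mult_def by blast

lemma ideal_set_mult_sub:
  assumes "ideal_of R I" "F \<subseteq> I" shows "set_mult R F \<subseteq> I"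
proof
  fix z assume "z \<in> set_mult R F"
  then obtain n :: nat and x y where z: "z = (\<Sum>k<n. x k * y k)" and xy: "\<forall>k<n. x k \<in> R \<and> y k \<in> F"
    unfolding set_mult_iff by blast
  have I: "0 \<in> I" "\<forall>x\<in>I. \<forall>y\<in>I. x + y \<in> I" "\<forall>r\<in>R. \<forall>x\<in>I. r * x \<in> I"
    using assms(1) unfolding ideal_of_def by auto
  show "z \<in> I" unfolding z
    by (rule sum_closed[OF I(1,2)]) (use assms(2) xy I(3) in blast)
qed

lemma set_mult_add1:
  assumes "a \<in> set_mult X Y" "u \<in> X" "v \<in> Y" shows "a + u * v \<in> set_mult X Y"
proof -
  obtain n :: nat and x y where a: "a = (\<Sum>k<n. x k * y k)" and xy: "\<forall>k<n. x k \<in> X \<and> y k \<in> Y"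
    using assms(1) unfolding set_mult_iff by blast
  have "a + u * v = (\<Sum>k<Suc n. (x(n:=u)) k * (y(n:=v)) k)"
    by (simp add: a)
  moreover have "\<forall>k<Suc n. (x(n:=u)) k \<in> X \<and> (y(n:=v)) k \<in> Y"
    using xy assms by (auto simp: less_Suc_eq)
  ultimately show ?thesis unfolding set_mult_iff by blast
qed

lemma set_mult_zero: "0 \<in> set_mult X Y"
  unfolding set_mult_iff by (rule exI[of _ 0]) auto

lemma set_mult_add:
  assumes "a \<in> set_mult X Y" "b \<in> set_mult X Y" shows "a + b \<in> set_mult X Y"
proof -
  obtain m :: nat and x y where b: "b = (\<Sum>k<m. x k * y k)" and xy: "\<forall>k<m. x k \<in> X \<and> y k \<in> Y"
    using assms(2) unfolding set_mult_iff by blast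
  have "\<forall>k\<le>m. a + (\<Sum>i<k. x i * y i) \<in> set_mult X Y"
  proof (intro allI impI)
    fix k assume "k \<le> m" then show "a + (\<Sum>i<k. x i * y i) \<in> set_mult X Y"
    proof (induction k)
      case 0 then show ?case using assms(1) by simp
    next
      case (Suc k)
      then have "a + (\<Sum>i<k. x i * y i) + x k * y k \<in> set_mult X Y"
        using xy by (intro set_mult_add1) auto
      then show ?case by (simp add: add.assoc)
    qed
  qed
  then show ?thesis using b by auto
qed

lemma set_mult_single: "u \<in> X \<Longrightarrow> v \<in> Y \<Longrightarrow> u * v \<in> set_mult X Y"
  using set_mult_add1[OF set_mult_zero] by fastforce

definition noeth :: "'a::field set \<Rightarrow> bool" where
  "noeth R \<longleftrightarrow> (\<forall>I. ideal_of R I \<longrightarrow> (\<exists>F. finite F \<and> F \<subseteq> I \<and> I = set_mult R F))"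

lemma noeth_max:
  assumes "noeth R" "S \<noteq> {}" "\<forall>I\<in>S. ideal_of R I"
  shows "\<exists>M\<in>S. \<forall>X\<in>S. M \<subseteq> X \<longrightarrow> X = M"
proof (rule subset_Zorn_nonempty[OF assms(2)])
  fix C assume C: "C \<noteq> {}" "subset.chain S C"
  have ch: "C \<subseteq> S" "\<forall>X\<in>C. \<forall>Y\<in>C. X \<subseteq> Y \<or> Y \<subseteq> X" using C(2) by (auto simp: subset_chain_def)
  have id: "ideal_of R X" if "X \<in> C" for X using ch assms(3) that by auto
  have idC: "ideal_of R (\<Union>C)"
    unfolding ideal_of_def
  proof (intro conjI ballI)
    show "\<Union>C \<subseteq> R" using id unfolding ideal_of_def by blast
    obtain Z where "Z \<in> C" using C(1) by blast
    then show "0 \<in> \<Union>C" using id[of Z] unfolding ideal_of_def by blast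
    fix x y assume "x \<in> \<Union>C" "y \<in> \<Union>C"
    then obtain X Y where "x \<in> X" "y \<in> Y" "X \<in> C" "Y \<in> C" by blast
    then have "x \<in> X \<and> y \<in> X \<or> x \<in> Y \<and> y \<in> Y" using ch(2) by blast
    moreover have "\<forall>x\<in>Z. \<forall>y\<in>Z. x + y \<in> Z" if "Z \<in> C" for Z using id[OF that] unfolding ideal_of_def by blast
    ultimately show "x + y \<in> \<Union>C" using \<open>X \<in> C\<close> \<open>Y \<in> C\<close> by blast
  next
    fix r x assume "r \<in> R" "x \<in> \<Union>C"
    then obtain X where "x \<in> X" "X \<in> C" by blast
    moreover have "\<forall>r\<in>R. \<forall>x\<in>Z. r * x \<in> Z" if "Z \<in> C" for Z using id[OF that] unfolding ideal_of_def by blast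
    ultimately show "r * x \<in> \<Union>C" using \<open>r \<in> R\<close> by blast
  qed
  then obtain F where F: "finite F" "F \<subseteq> \<Union>C" "\<Union>C = set_mult R F"
    using assms(1)[unfolded noeth_def, rule_format, OF idC] by (elim exE conjE) simp
  obtain B where B: "B \<in> C" "F \<subseteq> B" by (rule finite_subset_Union_chain[OF F(1,2) C(1,2)])
  have "\<Union>C \<subseteq> B" using F(3) ideal_set_mult_sub[OF id[OF B(1)] B(2)] by simp
  then have "\<Union>C = B" using B(1) by auto
  then show "\<Union>C \<in> S" using B(1) ch(1) by auto
qed

lemma subring_closed:
  assumes "subring R" "x \<in> R" "y \<in> R"
  shows "x + y \<in> R" "x - y \<in> R" "x * y \<in> R"
  using assms unfolding subring_def by auto

lemma L1:
  fixes x c :: "'a::field"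
  assumes sub: "subring R" and nR: "noeth R" and c: "c \<in> R" "c \<noteq> 0"
    and cx: "\<forall>n. c * x ^ n \<in> R"
  shows "integral_over R x"
proof -
  define RP where "RP = {p::'a poly. \<forall>i. coeff p i \<in> R}"
  have R0: "0 \<in> R" and R1: "1 \<in> R" using sub unfolding subring_def by auto
  have RPadd: "p + q \<in> RP" if "p \<in> RP" "q \<in> RP" for p q
    using that sub by (auto simp: RP_def coeff_add subring_closed)
  have RPsmult: "smult r p \<in> RP" if "r \<in> R" "p \<in> RP" for r p
    using that sub by (auto simp: RP_def subring_closed)
  have RP0: "0 \<in> RP" using R0 by (auto simp: RP_def)
  have RPmonom: "monom 1 k \<in> RP" for k using R0 R1 by (auto simp: RP_def)
  have polyin: "c * poly p x \<in> R" if "p \<in> RP" for p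
  proof -
    have "c * poly p x = (\<Sum>i<Suc (degree p). coeff p i * (c * x ^ i))"
      by (simp add: poly_altdef lessThan_Suc_atMost sum_distrib_left algebra_simps)
    also have "\<dots> \<in> R"
      by (rule subring_sum[OF sub]) (use that cx sub in \<open>auto simp: RP_def subring_closed\<close>)
    finally show ?thesis .
  qed
  define J where "J = {c * poly p x | p. p \<in> RP}"
  have idJ: "ideal_of R J"
    unfolding ideal_of_def
  proof (intro conjI ballI)
    show "J \<subseteq> R" using polyin by (auto simp: J_def)
    show "0 \<in> J" unfolding J_def using RP0 by force
  next
    fix a b assume "a \<in> J" "b \<in> J"
    then obtain p q where "p \<in> RP" "q \<in> RP" "a = c * poly p x" "b = c * poly q x"
      unfolding J_def by blast
    then show "a + b \<in> J" unfolding J_def using RPadd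
      by (intro CollectI exI[of _ "p + q"]) (auto simp: algebra_simps)
  next
    fix r a assume "r \<in> R" "a \<in> J"
    then obtain p where "p \<in> RP" "a = c * poly p x"
      unfolding J_def by blast
    then show "r * a \<in> J" unfolding J_def using RPsmult \<open>r \<in> R\<close>
      by (intro CollectI exI[of _ "smult r p"]) (auto simp: algebra_simps)
  qed
  then obtain F where F: "finite F" "F \<subseteq> J" "J = set_mult R F"
    using nR[unfolded noeth_def, rule_format, OF idJ] by (elim exE conjE) simp
  have "\<forall>f\<in>F. \<exists>p. p \<in> RP \<and> f = c * poly p x" using F(2) unfolding J_def by blast
  then obtain pf where pf: "\<forall>f\<in>F. pf f \<in> RP \<and> f = c * poly (pf f) x" by metis
  define N where "N = (\<Sum>f\<in>F. degree (pf f))"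
  have degN: "degree (pf f) \<le> N" if "f \<in> F" for f
    unfolding N_def using F(1) that by (intro member_le_sum) auto
  have cJ: "c * x ^ Suc N \<in> J" unfolding J_def using RPmonom[of "Suc N"]
    by (intro CollectI exI[of _ "monom 1 (Suc N)"]) (simp add: poly_monom)
  then obtain m :: nat and r g where rg: "c * x ^ Suc N = (\<Sum>k<m. r k * g k)"
    "\<forall>k<m. r k \<in> R \<and> g k \<in> F"
    using cJ unfolding F(3) set_mult_iff by blast
  define q where "q = (\<Sum>k<m. smult (r k) (pf (g k)))"
  have qRP: "q \<in> RP" unfolding q_def
    by (rule sum_closed[OF RP0]) (use RPadd RPsmult rg(2) pf in auto)
  have degq: "degree q \<le> N" unfolding q_def
    by (rule degree_sum_le) (use rg(2) degN order_trans[OF degree_smult_le] in auto)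
  have "c * poly q x = (\<Sum>k<m. r k * (c * poly (pf (g k)) x))"
    by (simp add: q_def poly_sum sum_distrib_left algebra_simps)
  also have "\<dots> = (\<Sum>k<m. r k * g k)" using rg(2) pf by (intro sum.cong) auto
  finally have cq: "c * poly q x = c * x ^ Suc N" using rg(1) by simp
  define P where "P = monom 1 (Suc N) - q"
  have cP: "coeff P (Suc N) = 1" using degq by (simp add: P_def coeff_eq_0)
  have "degree P \<le> Suc N" unfolding P_def
    by (rule degree_diff_le) (use degq in \<open>auto simp: degree_monom_eq\<close>)
  moreover have "Suc N \<le> degree P" using cP by (intro le_degree) simp
  ultimately have "degree P = Suc N" by simp
  then have "lead_coeff P = 1" using cP by simp
  moreover have "\<forall>i. coeff P i \<in> R"
    using qRP R0 R1 sub by (auto simp: P_def RP_def subring_closed)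
  moreover have "poly P x = 0"
    using cq c(2) by (simp add: P_def poly_monom)
  ultimately show ?thesis unfolding integral_over_def by blast
qed

lemma dd_noeth: "dedekind_domain R \<Longrightarrow> noeth R"
  unfolding dedekind_domain_def noeth_def by blast

lemma dd_sub: "dedekind_domain R \<Longrightarrow> subring R"
  unfolding dedekind_domain_def by blast

lemma dd_int:
  assumes dd: "dedekind_domain R" and c: "c \<in> R" "c \<noteq> 0"
    and cx: "\<forall>n. c * x ^ n \<in> R"
  shows "x \<in> R"
proof -
  have "integral_over R x" using L1[OF dd_sub[OF dd] dd_noeth[OF dd] c cx] .
  moreover have "x \<in> frac R"
  proof -
    have "c * x \<in> R" using cx[rule_format, of 1] by simp
    moreover have "x = (c * x) / c" using c by simp
    ultimately show ?thesis unfolding frac_def using c by blast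
  qed
  ultimately show ?thesis using dd unfolding dedekind_domain_def by blast
qed

fun prodset :: "'a::field set list \<Rightarrow> 'a set" where
  "prodset [] = {1}"
| "prodset (P # Ps) = {p * q | p q. p \<in> P \<and> q \<in> prodset Ps}"

definition goodlist :: "'a::field set \<Rightarrow> 'a set list \<Rightarrow> bool" where
  "goodlist R Ps \<longleftrightarrow> (\<forall>P\<in>set Ps. prime_ideal_of R P \<and> P \<noteq> {0})"

lemma prodset_append:
  "z \<in> prodset (Ps @ Qs) \<Longrightarrow> \<exists>p q. z = p * q \<and> p \<in> prodset Ps \<and> q \<in> prodset Qs"
proof (induction Ps arbitrary: z)
  case Nil then have "z = 1 * z \<and> 1 \<in> prodset [] \<and> z \<in> prodset Qs" by simp
  then show ?case by blast
next
  case (Cons P Ps)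
  then obtain p w where pw: "z = p * w" "p \<in> P" "w \<in> prodset (Ps @ Qs)" by (auto simp only: append_Cons prodset.simps mem_Collect_eq)
  then obtain p' q where "w = p' * q" "p' \<in> prodset Ps" "q \<in> prodset Qs" using Cons.IH by blast
  moreover have "p * p' \<in> prodset (P # Ps)" using pw(2) \<open>p' \<in> prodset Ps\<close> by auto
  ultimately show ?case using pw(1) by (metis mult.assoc)
qed

lemma prodset_remove:
  "P \<in> set Ps \<Longrightarrow> z \<in> prodset (P # remove1 P Ps) \<Longrightarrow> z \<in> prodset Ps"
proof (induction Ps arbitrary: z)
  case Nil then show ?case by simp
next
  case (Cons Q Qs)
  show ?case
  proof (cases "Q = P")
    case True then show ?thesis using Cons.prems by simp
  next
    case False
    then have "P \<in> set Qs" using Cons.prems by simp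
    from Cons.prems(2) False have "z \<in> prodset (P # Q # remove1 P Qs)" by simp
    then obtain p q w where pqw: "z = p * (q * w)" "p \<in> P" "q \<in> Q"
      "w \<in> prodset (remove1 P Qs)" by (auto simp only: prodset.simps mem_Collect_eq)
    then have "p * w \<in> prodset (P # remove1 P Qs)" by (auto simp only: prodset.simps mem_Collect_eq)
    then have "p * w \<in> prodset Qs" using Cons.IH \<open>P \<in> set Qs\<close> by blast
    moreover have "z = q * (p * w)" using pqw(1) by (simp add: algebra_simps)
    ultimately show ?thesis using pqw(3) by (auto simp only: prodset.simps mem_Collect_eq)
  qed
qed

lemma prodset_sub:
  assumes "subring R" "\<forall>P\<in>set Ps. P \<subseteq> R" shows "prodset Ps \<subseteq> R"
  using assms(2)
proof (induction Ps)
  case Nil then show ?case using assms(1) by (auto simp: subring_def)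
next
  case (Cons P Ps)
  show ?case
  proof
    fix z assume "z \<in> prodset (P # Ps)"
    then obtain p q where "z = p * q" "p \<in> P" "q \<in> prodset Ps" by auto
    then show "z \<in> R" using Cons subring_closed(3)[OF assms(1)] by auto
  qed
qed

lemma ideal_one:
  assumes "ideal_of R I" "1 \<in> I" shows "I = R"
proof -
  have "r \<in> I" if "r \<in> R" for r using assms that unfolding ideal_of_def by (metis mult.right_neutral)
  then show ?thesis using assms(1) unfolding ideal_of_def by blast
qed

lemma prime_contains:
  assumes sub: "subring R" and P: "prime_ideal_of R P"
    and Qs: "\<forall>Q\<in>set Ps. ideal_of R Q" and ps: "prodset Ps \<subseteq> P"
  shows "\<exists>Q\<in>set Ps. Q \<subseteq> P"
  using Qs ps
proof (induction Ps)
  case Nil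
  then have "1 \<in> P" by simp
  then show ?case using ideal_one P unfolding prime_ideal_of_def by blast
next
  case (Cons Q Qs)
  show ?case
  proof (cases "Q \<subseteq> P")
    case True then show ?thesis by simp
  next
    case False
    then obtain q where q: "q \<in> Q" "q \<notin> P" by blast
    have QR: "Q \<subseteq> R" using Cons.prems(1) unfolding ideal_of_def by simp
    have "prodset Qs \<subseteq> R" using prodset_sub[OF sub] Cons.prems(1) unfolding ideal_of_def by auto
    have "w \<in> P" if "w \<in> prodset Qs" for w
    proof -
      have "q * w \<in> P" using Cons.prems(2) q(1) that by auto
      then show ?thesis using P q QR that \<open>prodset Qs \<subseteq> R\<close> unfolding prime_ideal_of_def by blast
    qed
    then have "\<exists>Q\<in>set Qs. Q \<subseteq> P" using Cons.IH Cons.prems(1) by auto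
    then show ?thesis by auto
  qed
qed

definition ideal_add :: "'a::field set \<Rightarrow> 'a set \<Rightarrow> 'a \<Rightarrow> 'a set" where
  "ideal_add R I a = {m + r * a | m r. m \<in> I \<and> r \<in> R}"

lemma ideal_add:
  assumes sub: "subring R" and I: "ideal_of R I" and a: "a \<in> R"
  shows "ideal_of R (ideal_add R I a)" "I \<subseteq> ideal_add R I a" "a \<in> ideal_add R I a"
proof -
  have R0: "0 \<in> R" and R1: "1 \<in> R" using sub unfolding subring_def by auto
  have I0: "0 \<in> I" and IR: "I \<subseteq> R" and Iadd: "\<forall>x\<in>I. \<forall>y\<in>I. x + y \<in> I"
    and Imul: "\<forall>r\<in>R. \<forall>x\<in>I. r * x \<in> I" using I unfolding ideal_of_def by auto
  show "ideal_of R (ideal_add R I a)"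
    unfolding ideal_of_def
  proof (intro conjI ballI)
    show "ideal_add R I a \<subseteq> R"
    proof
      fix x assume "x \<in> ideal_add R I a"
      then obtain m r where "x = m + r * a" "m \<in> I" "r \<in> R" unfolding ideal_add_def by blast
      then show "x \<in> R" using IR a subring_closed(1,3)[OF sub] by auto
    qed
    show "0 \<in> ideal_add R I a" unfolding ideal_add_def using I0 R0
      by (intro CollectI exI[of _ 0]) simp
  next
    fix x y assume "x \<in> ideal_add R I a" "y \<in> ideal_add R I a"
    then obtain m r m' r' where "x = m + r * a" "y = m' + r' * a" "m \<in> I" "m' \<in> I" "r \<in> R" "r' \<in> R"
      unfolding ideal_add_def by blast
    then show "x + y \<in> ideal_add R I a" unfolding ideal_add_def using Iadd sub subring_closed
      by (intro CollectI exI[of _ "m + m'"] exI[of _ "r + r'"]) (auto simp: algebra_simps)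
  next
    fix s x assume "s \<in> R" "x \<in> ideal_add R I a"
    then obtain m r where "x = m + r * a" "m \<in> I" "r \<in> R"
      unfolding ideal_add_def by blast
    then show "s * x \<in> ideal_add R I a" unfolding ideal_add_def using Imul sub subring_closed \<open>s \<in> R\<close>
      by (intro CollectI exI[of _ "s * m"] exI[of _ "s * r"]) (auto simp: algebra_simps)
  qed
  show "I \<subseteq> ideal_add R I a"
  proof
    fix x assume "x \<in> I" then show "x \<in> ideal_add R I a" unfolding ideal_add_def using R0
      by (intro CollectI exI[of _ x] exI[of _ 0]) simp
  qed
  show "a \<in> ideal_add R I a" unfolding ideal_add_def using R1 I0
    by (intro CollectI exI[of _ 0] exI[of _ 1]) simp
qed

lemma max_prime:
  assumes sub: "subring R" and P: "maximal_ideal_of R P"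
  shows "prime_ideal_of R P"
proof -
  have PI: "ideal_of R P" "P \<noteq> R" using P unfolding maximal_ideal_of_def by auto
  have "a \<in> P \<or> b \<in> P" if ab: "a \<in> R" "b \<in> R" "a * b \<in> P" for a b
  proof (rule ccontr)
    assume "\<not> (a \<in> P \<or> b \<in> P)"
    then have "ideal_add R P a \<noteq> P" using ideal_add(3)[OF sub PI(1) ab(1)] by blast
    then have "ideal_add R P a = R" using P ideal_add(1,2)[OF sub PI(1) ab(1)]
      unfolding maximal_ideal_of_def by blast
    then have "1 \<in> ideal_add R P a" using sub unfolding subring_def by auto
    then obtain m r where mr: "1 = m + r * a" "m \<in> P" "r \<in> R" unfolding ideal_add_def by blast
    have "b = b * m + r * (a * b)" using mr(1) by (metis distrib_left mult.left_commute mult.right_neutral)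
    moreover have Pm: "\<forall>r\<in>R. \<forall>x\<in>P. r * x \<in> P" and Pa: "\<forall>x\<in>P. \<forall>y\<in>P. x + y \<in> P"
      using PI(1) unfolding ideal_of_def by auto
    moreover have "b * m \<in> P" using Pm mr(2) ab(2) by blast
    moreover have "r * (a * b) \<in> P" using Pm mr(3) ab(3) by blast
    ultimately have "b \<in> P" by metis
    then show False using \<open>\<not> (a \<in> P \<or> b \<in> P)\<close> by blast
  qed
  then show ?thesis using PI unfolding prime_ideal_of_def by blast
qed

lemma exists_max:
  assumes nR: "noeth R" and I: "ideal_of R I" "I \<noteq> R"
  shows "\<exists>P. maximal_ideal_of R P \<and> I \<subseteq> P"
proof -
  define S where "S = {J. ideal_of R J \<and> I \<subseteq> J \<and> J \<noteq> R}"
  have "I \<in> S" using I unfolding S_def by blast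
  then have "S \<noteq> {}" by blast
  moreover have "\<forall>J\<in>S. ideal_of R J" unfolding S_def by blast
  ultimately obtain P where P: "P \<in> S" "\<forall>X\<in>S. P \<subseteq> X \<longrightarrow> X = P"
    using noeth_max[OF nR] by meson
  have PP: "ideal_of R P" "I \<subseteq> P" "P \<noteq> R" using P(1) unfolding S_def by auto
  have "J = P \<or> J = R" if "ideal_of R J" "P \<subseteq> J" for J
  proof (cases "J = R")
    case False
    then have "J \<in> S" using that PP unfolding S_def by blast
    then show ?thesis using P(2) that(2) by blast
  qed simp
  then have "maximal_ideal_of R P" unfolding maximal_ideal_of_def using PP by blast
  then show ?thesis using PP(2) by blast
qed

lemma prime_prod:
  assumes sub: "subring R" and nR: "noeth R" and I: "ideal_of R I" "I \<noteq> {0}"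
  shows "\<exists>Ps. goodlist R Ps \<and> prodset Ps \<subseteq> I"
proof (rule ccontr)
  assume nex: "\<not> ?thesis"
  define S where "S = {J. ideal_of R J \<and> J \<noteq> {0} \<and> \<not> (\<exists>Ps. goodlist R Ps \<and> prodset Ps \<subseteq> J)}"
  have "I \<in> S" using I nex unfolding S_def by blast
  then have "S \<noteq> {}" by blast
  moreover have "\<forall>J\<in>S. ideal_of R J" unfolding S_def by blast
  ultimately obtain M where M: "M \<in> S" "\<forall>X\<in>S. M \<subseteq> X \<longrightarrow> X = M"
    using noeth_max[OF nR] by meson
  have MI: "ideal_of R M" "M \<noteq> {0}" and Mn: "\<not> (\<exists>Ps. goodlist R Ps \<and> prodset Ps \<subseteq> M)"
    using M(1) unfolding S_def by auto
  have R1: "1 \<in> R" using sub unfolding subring_def by auto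
  have "M \<noteq> R"
  proof
    assume "M = R"
    then have "goodlist R [] \<and> prodset [] \<subseteq> M" using R1 by (simp add: goodlist_def)
    then show False using Mn by blast
  qed
  have "\<not> prime_ideal_of R M"
  proof
    assume "prime_ideal_of R M"
    then have "goodlist R [M]" using MI by (simp add: goodlist_def)
    moreover have "prodset [M] \<subseteq> M" by auto
    ultimately show False using Mn by blast
  qed
  then obtain a b where ab: "a \<in> R" "b \<in> R" "a * b \<in> M" "a \<notin> M" "b \<notin> M"
    using MI(1) \<open>M \<noteq> R\<close> unfolding prime_ideal_of_def by blast
  have big: "\<exists>Ps. goodlist R Ps \<and> prodset Ps \<subseteq> ideal_add R M c" if c: "c \<in> R" "c \<notin> M" for c
  proof -
    have id: "ideal_of R (ideal_add R M c)" "M \<subseteq> ideal_add R M c" "c \<in> ideal_add R M c"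
      using ideal_add[OF sub MI(1) c(1)] by auto
    have "ideal_add R M c \<noteq> {0}" using id(2) MI(2) MI(1) unfolding ideal_of_def by blast
    moreover have "ideal_add R M c \<noteq> M" using id(3) c(2) by blast
    ultimately have "ideal_add R M c \<notin> S" using M(2) id(2) by blast
    then show ?thesis using id(1) \<open>ideal_add R M c \<noteq> {0}\<close> unfolding S_def by blast
  qed
  obtain Ps where Ps: "goodlist R Ps" "prodset Ps \<subseteq> ideal_add R M a" using big ab by blast
  obtain Qs where Qs: "goodlist R Qs" "prodset Qs \<subseteq> ideal_add R M b" using big ab by blast
  have Mm: "\<forall>r\<in>R. \<forall>x\<in>M. r * x \<in> M" and Ma: "\<forall>x\<in>M. \<forall>y\<in>M. x + y \<in> M" and MR: "M \<subseteq> R"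
    using MI(1) unfolding ideal_of_def by auto
  have "goodlist R (Ps @ Qs)" using Ps(1) Qs(1) unfolding goodlist_def by auto
  moreover have "prodset (Ps @ Qs) \<subseteq> M"
  proof
    fix z assume "z \<in> prodset (Ps @ Qs)"
    then obtain p q where pq: "z = p * q" "p \<in> prodset Ps" "q \<in> prodset Qs"
      using prodset_append by blast
    obtain m1 r1 where 1: "p = m1 + r1 * a" "m1 \<in> M" "r1 \<in> R"
      using pq(2) Ps(2) unfolding ideal_add_def by blast
    obtain m2 r2 where 2: "q = m2 + r2 * b" "m2 \<in> M" "r2 \<in> R"
      using pq(3) Qs(2) unfolding ideal_add_def by blast
    have qR: "q \<in> R" using pq(3) Qs(2) ideal_add(1)[OF sub MI(1) ab(2)] unfolding ideal_of_def by blast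
    have "z = q * m1 + ((r1 * a) * m2 + (r1 * r2) * (a * b))"
      using 1(1) 2(1) pq(1) by (simp add: algebra_simps)
    moreover have "q * m1 \<in> M" using Mm qR 1(2) by blast
    moreover have "r1 * a \<in> R" using sub 1(3) ab(1) subring_closed(3) by blast
    then have "(r1 * a) * m2 \<in> M" using Mm 2(2) by blast
    moreover have "r1 * r2 \<in> R" using sub 1(3) 2(3) subring_closed(3) by blast
    then have "(r1 * r2) * (a * b) \<in> M" using Mm ab(3) by blast
    ultimately show "z \<in> M" using Ma by metis
  qed
  ultimately show False using Mn by blast
qed

lemma inv_elem:
  assumes dd: "dedekind_domain R" and P: "maximal_ideal_of R P" "P \<noteq> {0}"
  shows "\<exists>y. y \<notin> R \<and> (\<forall>p\<in>P. y * p \<in> R)"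
proof -
  have sub: "subring R" and nR: "noeth R" using dd by (auto simp: dd_sub dd_noeth)
  have ddmax: "\<And>Q. prime_ideal_of R Q \<Longrightarrow> Q \<noteq> {0} \<Longrightarrow> maximal_ideal_of R Q"
    using dd unfolding dedekind_domain_def by blast
  have R0: "0 \<in> R" and R1: "1 \<in> R" using sub unfolding subring_def by auto
  have PI: "ideal_of R P" "P \<noteq> R" using P unfolding maximal_ideal_of_def by auto
  have PR: "P \<subseteq> R" and P0: "0 \<in> P" and Pm: "\<forall>r\<in>R. \<forall>x\<in>P. r * x \<in> P"
    using PI(1) unfolding ideal_of_def by auto
  have Pp: "prime_ideal_of R P" using max_prime[OF sub P(1)] .
  obtain a where a: "a \<in> P" "a \<noteq> 0" using P(2) P0 by blast
  have aR: "a \<in> R" using a PR by blast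
  define Ra where "Ra = ideal_add R {0} a"
  have z: "ideal_of R {0}" using R0 unfolding ideal_of_def by simp
  have Raid: "ideal_of R Ra" "a \<in> Ra" using ideal_add[OF sub z aR] unfolding Ra_def by auto
  have Ra_iff: "x \<in> Ra \<longleftrightarrow> (\<exists>r\<in>R. x = r * a)" for x unfolding Ra_def ideal_add_def by auto
  have RaP: "Ra \<subseteq> P"
  proof
    fix x assume "x \<in> Ra" then obtain r where "r \<in> R" "x = r * a" using Ra_iff by blast
    then show "x \<in> P" using Pm a(1) by blast
  qed
  have "Ra \<noteq> {0}" using Raid(2) a(2) by blast
  define K where "K = {n. \<exists>Ps. length Ps = n \<and> goodlist R Ps \<and> prodset Ps \<subseteq> Ra}"
  obtain Ps0 where "goodlist R Ps0" "prodset Ps0 \<subseteq> Ra" using prime_prod[OF sub nR Raid(1) \<open>Ra \<noteq> {0}\<close>] by blast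
  then have "length Ps0 \<in> K" unfolding K_def by blast
  define n where "n = (LEAST n. n \<in> K)"
  have "n \<in> K" unfolding n_def using \<open>length Ps0 \<in> K\<close> by (rule LeastI)
  then obtain Ps where Ps: "length Ps = n" "goodlist R Ps" "prodset Ps \<subseteq> Ra" unfolding K_def by blast
  have minK: "m \<notin> K" if "m < n" for m using not_less_Least[of m "\<lambda>n. n \<in> K"] that unfolding n_def by blast
  have gl: "prime_ideal_of R Q \<and> Q \<noteq> {0}" if "Q \<in> set Ps" for Q using Ps(2) that unfolding goodlist_def by blast
  have Qid: "\<forall>Q\<in>set Ps. ideal_of R Q" using gl unfolding prime_ideal_of_def by blast
  have "prodset Ps \<subseteq> P" using Ps(3) RaP by (rule order_trans)
  then obtain Q where Q: "Q \<in> set Ps" "Q \<subseteq> P" using prime_contains[OF sub Pp Qid] by blast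
  have "maximal_ideal_of R Q" using ddmax gl[OF Q(1)] by blast
  then have "\<forall>J. ideal_of R J \<and> Q \<subseteq> J \<longrightarrow> J = Q \<or> J = R" unfolding maximal_ideal_of_def by blast
  then have "P = Q \<or> P = R" using PI(1) Q(2) by blast
  then have PQ: "P \<in> set Ps" using PI(2) Q(1) by blast
  define Ps' where "Ps' = remove1 P Ps"
  have "length Ps' < n" using PQ Ps(1) unfolding Ps'_def using length_pos_if_in_set[OF PQ] by (simp add: length_remove1)
  then have nK: "length Ps' \<notin> K" by (rule minK)
  have "goodlist R Ps'" using Ps(2) set_remove1_subset[of P Ps] unfolding Ps'_def goodlist_def by blast
  then have "\<not> prodset Ps' \<subseteq> Ra" using nK unfolding K_def by blast
  then obtain b where b: "b \<in> prodset Ps'" "b \<notin> Ra" by blast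
  define y where "y = b / a"
  have "y * p \<in> R" if "p \<in> P" for p
  proof -
    have "p * b \<in> prodset (P # Ps')" using that b(1) by auto
    then have "p * b \<in> prodset Ps" using prodset_remove[OF PQ] unfolding Ps'_def by blast
    then have "p * b \<in> Ra" using Ps(3) by blast
    then obtain r where "r \<in> R" "p * b = r * a" using Ra_iff by blast
    then have "y * p = r" using a(2) unfolding y_def by (simp add: field_simps)
    then show ?thesis using \<open>r \<in> R\<close> by simp
  qed
  moreover have "y \<notin> R"
  proof
    assume "y \<in> R"
    moreover have "b = y * a" using a(2) unfolding y_def by simp
    ultimately show False using b(2) Ra_iff by blast
  qed
  ultimately show ?thesis by blast
qed

lemma stable_in:
  assumes dd: "dedekind_domain R" and I: "ideal_of R I" "I \<noteq> {0}"
    and y: "\<forall>z\<in>I. y * z \<in> I"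
  shows "y \<in> R"
proof -
  obtain c where c: "c \<in> I" "c \<noteq> 0" using I unfolding ideal_of_def by blast
  have "c * y ^ n \<in> I" for n
  proof (induction n)
    case 0 then show ?case using c by simp
  next
    case (Suc n)
    then have "y * (c * y ^ n) \<in> I" using y by blast
    then show ?case by (simp add: algebra_simps)
  qed
  moreover have "I \<subseteq> R" using I unfolding ideal_of_def by blast
  ultimately have "\<forall>n. c * y ^ n \<in> R" by blast
  moreover have "c \<in> R" using c \<open>I \<subseteq> R\<close> by blast
  ultimately show ?thesis using dd_int[OF dd _ c(2)] by blast
qed

definition Inv :: "'a::field set \<Rightarrow> 'a set \<Rightarrow> 'a set" where
  "Inv R I = {u. \<forall>z\<in>I. u * z \<in> R}"

definition invtbl :: "'a::field set \<Rightarrow> 'a set \<Rightarrow> bool" where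
  "invtbl R I \<longleftrightarrow> 1 \<in> set_mult (Inv R I) I"

lemma all_invertible:
  assumes dd: "dedekind_domain R" and I: "ideal_of R I" "I \<noteq> {0}"
  shows "invtbl R I"
proof (rule ccontr)
  assume ni: "\<not> invtbl R I"
  have sub: "subring R" and nR: "noeth R" using dd by (auto simp: dd_sub dd_noeth)
  have R0: "0 \<in> R" and R1: "1 \<in> R" using sub unfolding subring_def by auto
  define S where "S = {J. ideal_of R J \<and> J \<noteq> {0} \<and> \<not> invtbl R J}"
  have "I \<in> S" using I ni unfolding S_def by blast
  then have "S \<noteq> {}" by blast
  moreover have "\<forall>J\<in>S. ideal_of R J" unfolding S_def by blast
  ultimately obtain M where M: "M \<in> S" "\<forall>X\<in>S. M \<subseteq> X \<longrightarrow> X = M"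
    using noeth_max[OF nR] by meson
  have MI: "ideal_of R M" "M \<noteq> {0}" and Mn: "\<not> invtbl R M"
    using M(1) unfolding S_def by auto
  have MR: "M \<subseteq> R" and M0: "0 \<in> M" and Mm: "\<forall>r\<in>R. \<forall>x\<in>M. r * x \<in> M"
    and Ma: "\<forall>x\<in>M. \<forall>y\<in>M. x + y \<in> M"
    using MI(1) unfolding ideal_of_def by auto
  have "M \<noteq> R"
  proof
    assume "M = R"
    have "1 \<in> Inv R R" unfolding Inv_def by simp
    then have "1 * 1 \<in> set_mult (Inv R R) R" using R1 by (rule set_mult_single)
    then have "invtbl R M" unfolding invtbl_def \<open>M = R\<close> by simp
    then show False using Mn by blast
  qed
  obtain P where P: "maximal_ideal_of R P" "M \<subseteq> P" using exists_max[OF nR MI(1) \<open>M \<noteq> R\<close>] by blast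
  have "P \<noteq> {0}" using P(2) MI(2) M0 by blast
  obtain y where y: "y \<notin> R" "\<forall>p\<in>P. y * p \<in> R" using inv_elem[OF dd P(1) \<open>P \<noteq> {0}\<close>] by blast
  have yM: "y * m \<in> R" if "m \<in> M" for m using y(2) P(2) that by blast
  define M' where "M' = {m + y * m' | m m'. m \<in> M \<and> m' \<in> M}"
  have M'_iff: "x \<in> M' \<longleftrightarrow> (\<exists>m m'. x = m + y * m' \<and> m \<in> M \<and> m' \<in> M)" for x
    unfolding M'_def by blast
  have idM': "ideal_of R M'"
    unfolding ideal_of_def
  proof (intro conjI ballI)
    show "M' \<subseteq> R"
    proof
      fix x assume "x \<in> M'"
      then obtain m m' where "x = m + y * m'" "m \<in> M" "m' \<in> M" using M'_iff by blast
      then show "x \<in> R" using MR yM subring_closed(1)[OF sub] by auto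
    qed
    show "0 \<in> M'" using M'_iff M0 by force
  next
    fix a b assume "a \<in> M'" "b \<in> M'"
    then obtain m1 m1' m2 m2' where "a = m1 + y * m1'" "b = m2 + y * m2'" "m1 \<in> M" "m1' \<in> M" "m2 \<in> M" "m2' \<in> M"
      using M'_iff by metis
    moreover have "a + b = (m1 + m2) + y * (m1' + m2')" using calculation by (simp add: algebra_simps)
    ultimately show "a + b \<in> M'" using M'_iff Ma by blast
  next
    fix r a assume "r \<in> R" "a \<in> M'"
    then obtain m m' where "a = m + y * m'" "m \<in> M" "m' \<in> M" using M'_iff by blast
    moreover have "r * a = r * m + y * (r * m')" using calculation by (simp add: algebra_simps)
    ultimately show "r * a \<in> M'" using M'_iff Mm \<open>r \<in> R\<close> by blast
  qed
  have MM': "M \<subseteq> M'"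
  proof
    fix m assume "m \<in> M" then have "m = m + y * 0 \<and> m \<in> M \<and> 0 \<in> M" using M0 by simp
    then show "m \<in> M'" using M'_iff by blast
  qed
  have yM': "y * m \<in> M'" if "m \<in> M" for m
  proof -
    have "y * m = 0 + y * m \<and> 0 \<in> M \<and> m \<in> M" using M0 that by simp
    then show ?thesis using M'_iff by blast
  qed
  have "M' \<noteq> M"
  proof
    assume "M' = M"
    then have "\<forall>z\<in>M. y * z \<in> M" using yM' by blast
    then have "y \<in> R" using stable_in[OF dd MI] by blast
    then show False using y(1) by blast
  qed
  have "M' \<noteq> {0}" using MM' MI(2) M0 by blast
  have "M' \<notin> S" using M(2) MM' \<open>M' \<noteq> M\<close> by blast
  then have invM': "invtbl R M'" using idM' \<open>M' \<noteq> {0}\<close> unfolding S_def by blast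
  have conv: "z \<in> set_mult (Inv R M) M" if zin: "z \<in> set_mult (Inv R M') M'" for z
  proof -
    obtain n :: nat and u j where z: "z = (\<Sum>k<n. u k * j k)" and uj: "\<forall>k<n. u k \<in> Inv R M' \<and> j k \<in> M'"
      using zin unfolding set_mult_iff by blast
    have trm: "u k * j k \<in> set_mult (Inv R M) M" if kn: "k < n" for k
    proof -
      obtain m m' where mm: "j k = m + y * m'" "m \<in> M" "m' \<in> M" using uj kn M'_iff by blast
      have uI: "\<forall>w\<in>M'. u k * w \<in> R" using uj kn unfolding Inv_def by blast
      have "u k \<in> Inv R M" unfolding Inv_def using uI MM' by blast
      moreover have "u k * y \<in> Inv R M" unfolding Inv_def
      proof (intro CollectI ballI)
        fix w assume "w \<in> M"
        then have "u k * (y * w) \<in> R" using uI yM' by blast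
        then show "u k * y * w \<in> R" by (simp add: mult.assoc)
      qed
      ultimately have "u k * m + (u k * y) * m' \<in> set_mult (Inv R M) M"
        using mm(2,3) by (intro set_mult_add set_mult_single)
      moreover have "u k * j k = u k * m + (u k * y) * m'" using mm(1) by (simp add: algebra_simps)
      ultimately show ?thesis by simp
    qed
    have "\<forall>k'\<le>n. (\<Sum>k<k'. u k * j k) \<in> set_mult (Inv R M) M"
    proof (intro allI impI)
      fix k' assume "k' \<le> n" then show "(\<Sum>k<k'. u k * j k) \<in> set_mult (Inv R M) M"
      proof (induction k')
        case 0 then show ?case using set_mult_zero by simp
      next
        case (Suc k')
        then have "(\<Sum>k<k'. u k * j k) + u k' * j k' \<in> set_mult (Inv R M) M"
          by (intro set_mult_add trm) simp_all
        then show ?case by simp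
      qed
    qed
    then show ?thesis using z by blast
  qed
  have "invtbl R M" using conv invM' unfolding invtbl_def by blast
  then show False using Mn by blast
qed

lemma common_denom:
  assumes sub: "subring R" and F: "finite F" and g: "\<forall>f\<in>F. g f \<in> frac R"
  shows "\<exists>d\<in>R. d \<noteq> 0 \<and> (\<forall>f\<in>F. d * g f \<in> R)"
  using F g
proof (induction F rule: finite_induct)
  case empty then show ?case using sub unfolding subring_def by (intro bexI[of _ 1]) auto
next
  case (insert f F)
  then obtain d where d: "d \<in> R" "d \<noteq> 0" "\<forall>f\<in>F. d * g f \<in> R" by blast
  have "g f \<in> frac R" using insert.prems by blast
  then obtain a b where ab: "g f = a / b" "a \<in> R" "b \<in> R" "b \<noteq> 0" unfolding frac_def by blast
  have "d * b \<in> R" using d ab sub subring_closed(3) by blast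
  moreover have "d * b \<noteq> 0" using d ab by simp
  moreover have "d * b * g f = d * a" using ab by simp
  then have "d * b * g f \<in> R" using ab d sub subring_closed(3) by metis
  moreover have "d * b * g f' \<in> R" if "f' \<in> F" for f'
  proof -
    have "d * b * g f' = b * (d * g f')" by (simp add: algebra_simps)
    then show ?thesis using d(3) that ab(3) sub subring_closed(3) by metis
  qed
  ultimately show ?case by (intro bexI[of _ "d * b"]) auto
qed

lemma lin_denom:
  assumes sub: "subring R" and F: "finite F" and OL: "S = set_mult R F"
    and hadd: "\<forall>x y. h (x + y) = h x + h y" and hmul: "\<forall>r\<in>R. \<forall>x. h (r * x) = r * h x"
    and hF: "\<forall>f\<in>F. h f \<in> frac R"
  shows "\<exists>d\<in>R. d \<noteq> 0 \<and> (\<forall>t\<in>S. d * h t \<in> R)"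
proof -
  obtain d where d: "d \<in> R" "d \<noteq> 0" "\<forall>f\<in>F. d * h f \<in> R" using common_denom[OF sub F hF] by blast
  have h0: "h 0 = 0" using hadd[rule_format, of 0 0] by (metis add_cancel_right_right add_0)
  have "d * h t \<in> R" if "t \<in> S" for t
  proof -
    obtain n :: nat and r f where t: "t = (\<Sum>k<n. r k * f k)" and rf: "\<forall>k<n. r k \<in> R \<and> f k \<in> F"
      using \<open>t \<in> S\<close> unfolding OL set_mult_iff by blast
    have hs: "h (\<Sum>k<m. r k * f k) = (\<Sum>k<m. r k * h (f k))" if "m \<le> n" for m
      using that
    proof (induction m)
      case 0 then show ?case using h0 by simp
    next
      case (Suc m) then show ?case using hadd hmul rf by simp
    qed
    have "d * h t = (\<Sum>k<n. r k * (d * h (f k)))" using hs[of n] t by (simp add: sum_distrib_left algebra_simps)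
    also have "\<dots> \<in> R" by (rule subring_sum[OF sub]) (use rf d(3) sub subring_closed(3) in blast)
    finally show ?thesis .
  qed
  then show ?thesis using d by blast
qed

lemma subring_pow: "subring R \<Longrightarrow> x \<in> R \<Longrightarrow> x ^ n \<in> R"
  by (induction n) (auto simp: subring_def)

theorem proposition3p8:
  fixes OM OL :: "'a::field set" and \<sigma> :: "'a \<Rightarrow> 'a"
  assumes "dedekind_domain OM" and "dedekind_domain OL" and "OM \<subseteq> OL"
    and "fin_gen_module OM OL"
    and "frac OL = UNIV"
    and "degree_two_over (frac OM)"
    and "galois_over (frac OM)"
    and "Gal (frac OM) = {id, \<sigma>}" and "\<sigma> \<noteq> id"
  shows "(\<forall>I. ideal_of OM I \<and> I \<noteq> {0} \<longrightarrow>
           {m + y | m y. m \<in> OM \<and> y \<in> set_mult I OL}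
           = {x \<in> OL. x - \<sigma> x \<in> set_mult I ((\<lambda>x. x - \<sigma> x) ` OL)})
         \<and> projective_module OM ((\<lambda>x. x - \<sigma> x) ` OL)
         \<and> rank_one OM ((\<lambda>x. x - \<sigma> x) ` OL)"
proof -
  define A where "A = (\<lambda>x. x - \<sigma> x) ` OL"
  have ddM: "dedekind_domain OM" using assms(1) .
  have subM: "subring OM" and subL: "subring OL" using assms(1,2) by (auto simp: dd_sub)
  have M0: "0 \<in> OM" and M1: "1 \<in> OM" using subM unfolding subring_def by auto
  have L0: "0 \<in> OL" and L1: "1 \<in> OL" using subL unfolding subring_def by auto
  have "\<sigma> \<in> Gal (frac OM)" using assms(8) by blast
  then have fa: "field_aut \<sigma>" and sfix: "\<forall>k\<in>frac OM. \<sigma> k = k" unfolding Gal_def by auto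
  have sadd: "\<sigma> (x + y) = \<sigma> x + \<sigma> y" and smul: "\<sigma> (x * y) = \<sigma> x * \<sigma> y" for x y
    using fa unfolding field_aut_def by auto
  have s1: "\<sigma> 1 = 1" and sbij: "bij \<sigma>" using fa unfolding field_aut_def by auto
  have s0: "\<sigma> 0 = 0" using sadd[of 0 0] by (metis add_cancel_right_right add_0)
  have sdiff: "\<sigma> (x - y) = \<sigma> x - \<sigma> y" for x y
    using sadd[of "x - y" y] by (simp add: algebra_simps)
  have sinj: "x = y" if "\<sigma> x = \<sigma> y" for x y
    using sbij that unfolding bij_def inj_def by blast
  have sdiv: "\<sigma> (x / y) = \<sigma> x / \<sigma> y" for x y
  proof (cases "y = 0")
    case True then show ?thesis using s0 by simp
  next
    case False
    then have "\<sigma> y \<noteq> 0" using sinj s0 by metis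
    moreover have "\<sigma> (x / y) * \<sigma> y = \<sigma> x" using smul[of "x / y" y] False by simp
    ultimately show ?thesis by (simp add: eq_divide_eq)
  qed
  have spow: "\<sigma> (x ^ n) = \<sigma> x ^ n" for x n
    by (induction n) (auto simp: s1 smul)
  have ssum: "\<sigma> (\<Sum>k<n. f k) = (\<Sum>k<n. \<sigma> (f k))" for f and n :: nat
    by (induction n) (auto simp: s0 sadd)
  have ss: "\<sigma> (\<sigma> x) = x" for x
  proof -
    have "field_aut (\<sigma> \<circ> \<sigma>)" unfolding field_aut_def
      using sbij bij_comp[OF sbij sbij] s1 sadd smul by simp
    moreover have "\<forall>k\<in>frac OM. (\<sigma> \<circ> \<sigma>) k = k" using sfix by simp
    ultimately have "\<sigma> \<circ> \<sigma> \<in> Gal (frac OM)" unfolding Gal_def by blast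
    then have "\<sigma> \<circ> \<sigma> = id \<or> \<sigma> \<circ> \<sigma> = \<sigma>" using assms(8) by blast
    moreover have "\<sigma> \<circ> \<sigma> \<noteq> \<sigma>"
    proof
      assume "\<sigma> \<circ> \<sigma> = \<sigma>"
      then have "\<sigma> (\<sigma> z) = \<sigma> z" for z by (metis comp_apply)
      then have "\<sigma> z = z" for z using sinj by blast
      then show False using assms(9) by auto
    qed
    ultimately have "\<sigma> \<circ> \<sigma> = id" by blast
    then show ?thesis by (metis comp_apply id_apply)
  qed
  have fixed: "\<sigma> x = x \<longleftrightarrow> x \<in> frac OM" for x
  proof -
    have "{x. \<forall>\<tau>\<in>Gal (frac OM). \<tau> x = x} = frac OM" using assms(7) unfolding galois_over_def .
    then have "{x. \<forall>\<tau>\<in>{id, \<sigma>}. \<tau> x = x} = frac OM" using assms(8) by simp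
    then show ?thesis by auto
  qed
  have OMfrac: "r \<in> frac OM" if "r \<in> OM" for r
  proof -
    have "r = r / 1" by simp
    then show ?thesis unfolding frac_def using that M1 by fastforce
  qed
  have sOM: "\<sigma> r = r" if "r \<in> OM" for r using OMfrac[OF that] fixed by blast
  obtain w where w: "\<sigma> w \<noteq> w" using assms(9) by (metis eq_id_iff)
  obtain F where F: "finite F" "F \<subseteq> OL" "OL = set_mult OM F"
    using assms(4) unfolding fin_gen_module_def by blast
  have hlin: "\<forall>x y. h (x + y) = h x + h y" "\<forall>r\<in>OM. \<forall>x. h (r * x) = r * h x"
    if "h = (\<lambda>z. c * (z * u - \<sigma> z * v))" for h c u v
    using that sOM by (auto simp: sadd smul algebra_simps)
  have KEY: "x \<in> OM" if x: "x \<in> OL" "\<sigma> x = x" for x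
  proof -
    define \<delta> where "\<delta> = \<sigma> w - w"
    have \<delta>: "\<delta> \<noteq> 0" using w unfolding \<delta>_def by simp
    define h where "h = (\<lambda>z. (1 / \<delta>) * (z * \<sigma> w - \<sigma> z * w))"
    have hfix: "\<sigma> (h z) = h z" for z
    proof -
      have "\<sigma> (h z) = (1 / (w - \<sigma> w)) * (\<sigma> z * w - z * \<sigma> w)"
        unfolding h_def \<delta>_def by (simp add: smul sdiv sdiff s1 ss)
      also have "\<dots> = h z" unfolding h_def \<delta>_def
        by (metis (no_types, lifting) divide_minus_left divide_minus_right minus_diff_eq mult_minus_left
            mult_minus_right times_divide_eq_left)
      finally show ?thesis .
    qed
    have hF: "\<forall>f\<in>F. h f \<in> frac OM" using hfix fixed by blast
    obtain d where d: "d \<in> OM" "d \<noteq> 0" "\<forall>t\<in>OL. d * h t \<in> OM"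
      using lin_denom[OF subM F(1) F(3) hlin[OF h_def] hF] by blast
    have "d * x ^ n \<in> OM" for n
    proof -
      have "x ^ n \<in> OL" using subring_pow[OF subL x(1)] .
      moreover have "h (x ^ n) = x ^ n" using x(2) \<delta> unfolding h_def \<delta>_def
        by (simp add: spow field_simps)
      ultimately show ?thesis using d(3) by metis
    qed
    then show ?thesis using dd_int[OF ddM d(1,2)] by blast
  qed
  have OMsubL: "r \<in> OL" if "r \<in> OM" for r using assms(3) that by blast
  have part1: "{m + y | m y. m \<in> OM \<and> y \<in> set_mult I OL}
           = {x \<in> OL. x - \<sigma> x \<in> set_mult I A}" if I: "ideal_of OM I" "I \<noteq> {0}" for I
  proof (intro equalityI subsetI)
    have IM: "I \<subseteq> OM" using I(1) unfolding ideal_of_def by blast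
    fix z assume "z \<in> {m + y | m y. m \<in> OM \<and> y \<in> set_mult I OL}"
    then obtain m y where my: "z = m + y" "m \<in> OM" "y \<in> set_mult I OL" by blast
    obtain n :: nat and i l where y: "y = (\<Sum>k<n. i k * l k)" and il: "\<forall>k<n. i k \<in> I \<and> l k \<in> OL"
      using my(3) unfolding set_mult_iff by blast
    have "y \<in> OL" unfolding y
      by (rule subring_sum[OF subL]) (use il IM OMsubL subring_closed(3)[OF subL] in blast)
    then have "z \<in> OL" using my OMsubL subring_closed(1)[OF subL] by blast
    moreover have "z - \<sigma> z = (\<Sum>k<n. i k * (l k - \<sigma> (l k)))"
    proof -
      have "\<sigma> y = (\<Sum>k<n. i k * \<sigma> (l k))" unfolding y ssum
        using il IM sOM by (intro sum.cong) (auto simp: smul)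
      then show ?thesis using my(1) sOM[OF my(2)] y by (simp add: sadd sum_subtractf algebra_simps)
    qed
    moreover have "(\<Sum>k<n. i k * (l k - \<sigma> (l k))) \<in> set_mult I A"
      unfolding set_mult_iff A_def using il
      by (intro exI[of _ n] exI[of _ i] exI[of _ "\<lambda>k. l k - \<sigma> (l k)"]) blast
    ultimately show "z \<in> {x \<in> OL. x - \<sigma> x \<in> set_mult I A}" by simp
  next
    have IM: "I \<subseteq> OM" using I(1) unfolding ideal_of_def by blast
    fix z assume "z \<in> {x \<in> OL. x - \<sigma> x \<in> set_mult I A}"
    then have z: "z \<in> OL" "z - \<sigma> z \<in> set_mult I A" by auto
    obtain n :: nat and i a where za: "z - \<sigma> z = (\<Sum>k<n. i k * a k)" and ia: "\<forall>k<n. i k \<in> I \<and> a k \<in> A"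
      using z(2) unfolding set_mult_iff by blast
    have "\<forall>k. \<exists>l. k < n \<longrightarrow> l \<in> OL \<and> a k = l - \<sigma> l" using ia unfolding A_def by blast
    then obtain l where l: "\<forall>k<n. l k \<in> OL \<and> a k = l k - \<sigma> (l k)" by metis
    define y where "y = (\<Sum>k<n. i k * l k)"
    have yI: "y \<in> set_mult I OL" unfolding set_mult_iff y_def using ia l by blast
    have "y \<in> OL" unfolding y_def
      by (rule subring_sum[OF subL]) (use ia l IM OMsubL subring_closed(3)[OF subL] in blast)
    define m where "m = z - y"
    have "m \<in> OL" unfolding m_def using z(1) \<open>y \<in> OL\<close> subring_closed(2)[OF subL] by blast
    moreover have "\<sigma> m = m"
    proof -
      have "\<sigma> y = (\<Sum>k<n. i k * \<sigma> (l k))" unfolding y_def ssum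
        using ia IM sOM by (intro sum.cong) (auto simp: smul)
      moreover have "z - \<sigma> z = (\<Sum>k<n. i k * (l k - \<sigma> (l k)))" using za l by simp
      ultimately have "z - \<sigma> z = y - \<sigma> y" unfolding y_def by (simp add: sum_subtractf algebra_simps)
      then show ?thesis unfolding m_def by (simp add: sdiff algebra_simps)
    qed
    ultimately have "m \<in> OM" using KEY by blast
    moreover have "z = m + y" unfolding m_def by simp
    ultimately show "z \<in> {m + y | m y. m \<in> OM \<and> y \<in> set_mult I OL}" using yI by blast
  qed
  have Aadd: "a + b \<in> A" if ab: "a \<in> A" "b \<in> A" for a b
  proof -
    obtain l1 l2 where "l1 \<in> OL" "l2 \<in> OL" "a = l1 - \<sigma> l1" "b = l2 - \<sigma> l2" using ab unfolding A_def by blast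
    moreover have "a + b = (l1 + l2) - \<sigma> (l1 + l2)" using calculation by (simp add: sadd)
    ultimately show ?thesis unfolding A_def using subring_closed(1)[OF subL] by blast
  qed
  have Amul: "r * a \<in> A" if ra: "r \<in> OM" "a \<in> A" for r a
  proof -
    obtain l where l: "l \<in> OL" "a = l - \<sigma> l" using ra unfolding A_def by blast
    moreover have "r * a = (r * l) - \<sigma> (r * l)" unfolding l(2) smul sOM[OF ra(1)] by (simp add: right_diff_distrib)
    ultimately show ?thesis unfolding A_def using subring_closed(3)[OF subL] OMsubL[OF ra(1)] by blast
  qed
  have A0: "0 \<in> A" unfolding A_def by (rule image_eqI[of _ _ 0]) (use s0 L0 in simp_all)
  have Asum: "(\<Sum>k<n. v k * b k) \<in> A" if "\<forall>k<n. v k \<in> OM \<and> b k \<in> A" for v b and n :: nat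
    by (rule sum_closed) (use A0 Aadd Amul that in auto)
  obtain l0 where l0: "l0 \<in> OL" "\<sigma> l0 \<noteq> l0"
  proof -
    have "w \<in> frac OL" using assms(5) by simp
    then obtain p q where pq: "w = p / q" "p \<in> OL" "q \<in> OL" unfolding frac_def by blast
    have "\<sigma> p \<noteq> p \<or> \<sigma> q \<noteq> q" using w pq(1) sdiv by metis
    then show ?thesis using that pq by blast
  qed
  define a0 where "a0 = l0 - \<sigma> l0"
  have a0: "a0 \<in> A" "a0 \<noteq> 0" using l0 unfolding a0_def A_def by auto
  have sa: "\<sigma> a = - a" if "a \<in> A" for a using that unfolding A_def by (auto simp: sdiff ss)
  have "\<forall>x\<in>A. \<exists>m\<in>frac OM. x = m * a0"
  proof
    fix x assume "x \<in> A"
    have "\<sigma> (x / a0) = x / a0" using sa[OF \<open>x \<in> A\<close>] sa[OF a0(1)] by (simp add: sdiv)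
    then have "x / a0 \<in> frac OM" using fixed by blast
    moreover have "x = (x / a0) * a0" using a0(2) by simp
    ultimately show "\<exists>m\<in>frac OM. x = m * a0" by blast
  qed
  then have rank: "rank_one OM A" unfolding rank_one_def using a0 by blast
  define h2 where "h2 = (\<lambda>z. a0 * (z * 1 - \<sigma> z * 1))"
  have h2fix: "\<sigma> (h2 z) = h2 z" for z
    using sa[OF a0(1)] unfolding h2_def by (simp add: smul sdiff ss algebra_simps)
  have h2F: "\<forall>f\<in>F. h2 f \<in> frac OM" using h2fix fixed by blast
  obtain d where d: "d \<in> OM" "d \<noteq> 0" "\<forall>t\<in>OL. d * h2 t \<in> OM"
    using lin_denom[OF subM F(1) F(3) hlin[OF h2_def] h2F] by blast
  define e where "e = d * a0"
  have e0: "e \<noteq> 0" unfolding e_def using d(2) a0(2) by simp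
  define J where "J = (\<lambda>a. e * a) ` A"
  have eA: "e * a \<in> OM" if aA: "a \<in> A" for a
  proof -
    obtain l where "l \<in> OL" "a = l - \<sigma> l" using aA unfolding A_def by blast
    moreover have "e * a = d * h2 l" using calculation unfolding e_def h2_def by simp
    ultimately show ?thesis using d(3) by metis
  qed
  have idJ: "ideal_of OM J" unfolding ideal_of_def
  proof (intro conjI ballI)
    show "J \<subseteq> OM" unfolding J_def using eA by blast
    show "0 \<in> J" unfolding J_def using A0 by force
  next
    fix x y assume "x \<in> J" "y \<in> J"
    then obtain a b where "a \<in> A" "b \<in> A" "x = e * a" "y = e * b" unfolding J_def by blast
    moreover have "x + y = e * (a + b)" using calculation by (simp add: algebra_simps)
    ultimately show "x + y \<in> J" unfolding J_def using Aadd by blast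
  next
    fix r x assume "r \<in> OM" "x \<in> J"
    then obtain a where "a \<in> A" "x = e * a" unfolding J_def by blast
    moreover have "r * x = e * (r * a)" using calculation by (simp add: algebra_simps)
    ultimately show "r * x \<in> J" unfolding J_def using Amul \<open>r \<in> OM\<close> by blast
  qed
  have "J \<noteq> {0}"
  proof
    assume "J = {0}"
    then have "e * a0 = 0" using a0(1) unfolding J_def by blast
    then show False using e0 a0(2) by simp
  qed
  then have "invtbl OM J" using all_invertible[OF ddM idJ] by blast
  then obtain n :: nat and u j where uj1: "1 = (\<Sum>k<n. u k * j k)" and uj: "\<forall>k<n. u k \<in> Inv OM J \<and> j k \<in> J"
    unfolding invtbl_def set_mult_iff by blast
  define \<iota> where "\<iota> = (\<lambda>x. (\<lambda>i. if i < n then u i * (e * x) else 0))"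
  define \<pi> where "\<pi> = (\<lambda>v. (\<Sum>k<n. v k * (j k / e)))"
  have jA: "j k / e \<in> A" if kn: "k < n" for k
  proof -
    obtain a where "a \<in> A" "j k = e * a" using uj kn unfolding J_def by blast
    then show ?thesis using e0 by simp
  qed
  have proj: "projective_module OM A" unfolding projective_module_def
  proof (intro exI[of _ n] exI[of _ \<iota>] exI[of _ \<pi>] conjI ballI)
    fix x assume "x \<in> A"
    have "e * x \<in> J" unfolding J_def using \<open>x \<in> A\<close> by blast
    then have "u i * (e * x) \<in> OM" if "i < n" for i using uj that unfolding Inv_def by blast
    then show "\<iota> x \<in> free_mod OM n" unfolding free_mod_def \<iota>_def using M0 by auto
    show "\<pi> (\<iota> x) = x"
    proof -
      have "\<pi> (\<iota> x) = (\<Sum>k<n. x * (u k * j k))" unfolding \<pi>_def \<iota>_def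
        using e0 by (intro sum.cong) (auto simp: field_simps)
      also have "\<dots> = x" using uj1 by (simp add: sum_distrib_left[symmetric])
      finally show ?thesis .
    qed
  next
    fix x y assume "x \<in> A" "y \<in> A"
    show "\<iota> (x + y) = (\<lambda>i. \<iota> x i + \<iota> y i)" unfolding \<iota>_def by (auto simp: algebra_simps)
  next
    fix r x assume "r \<in> OM" "x \<in> A"
    show "\<iota> (r * x) = (\<lambda>i. r * \<iota> x i)" unfolding \<iota>_def by (auto simp: algebra_simps)
  next
    fix v assume "v \<in> free_mod OM n"
    then have "\<forall>k<n. v k \<in> OM \<and> j k / e \<in> A" using jA unfolding free_mod_def by blast
    then show "\<pi> v \<in> A" unfolding \<pi>_def by (rule Asum)
  next
    fix v w assume "v \<in> free_mod OM n" "w \<in> free_mod OM n"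
    show "\<pi> (\<lambda>i. v i + w i) = \<pi> v + \<pi> w" unfolding \<pi>_def by (simp add: sum.distrib algebra_simps)
  next
    fix r v assume "r \<in> OM" "v \<in> free_mod OM n"
    show "\<pi> (\<lambda>i. r * v i) = r * \<pi> v" unfolding \<pi>_def by (simp add: sum_distrib_left algebra_simps)
  qed
  show ?thesis using part1 proj rank unfolding A_def by blast
qed

end
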